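(* Let $f_0,f_1\in \mathrm{PL}_0(\mathbf{I})$ satisfy $[f_1^{f_0},f_0f_1^{-1}]=1$ and $[f_0f_1^{-1},f_1^{f_0^2}]=1$. If $A$ is an orbital of $f_0$ and $B$ is an orbital of $f_1$ with $A\cap B\neq\emptyset$, then either $A\subseteq B$ or $B\subseteq A$.
   Context: $\mathrm{PL}_0(\mathbf{I})$ is the group of orientation-preserving piecewise-linear homeomorphisms of $[0,1]$ with finitely many points of non-differentiability. Functions act on the right: $tf=f(t)$, $fg=g\circ f$, $a^b=b^{-1}ab$, $[a,b]=aba^{-1}b^{-1}$. The orbitals of $f$ are the connected components (open intervals) of $\operatorname{Supp}(f)=\{x: xf\ne x\}$. *)

theory Defs
  imports "HOL-Analysis.Analysis"
begin

definition PL0 :: "(real \<Rightarrow> real) \<Rightarrow> bool" where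
  "PL0 f \<longleftrightarrow>
     (\<forall>x. x \<notin> {0..1} \<longrightarrow> f x = x) \<and>
     f 0 = 0 \<and> f 1 = 1 \<and>
     strict_mono_on {0..1} f \<and>
     continuous_on {0..1} f \<and>
     (\<exists>T. finite T \<and> T \<subseteq> {0..1} \<and> 0 \<in> T \<and> 1 \<in> T \<and>
        (\<forall>a b. a \<in> T \<and> b \<in> T \<and> a < b \<and> {a<..<b} \<inter> T = {} \<longrightarrow>
           (\<exists>m c. \<forall>x\<in>{a..b}. f x = m * x + c)))"

text \<open>Right actions: t(fg) = (tf)g, so the product fg is g \<circ> f.\<close>
definition pl_mult :: "(real \<Rightarrow> real) \<Rightarrow> (real \<Rightarrow> real) \<Rightarrow> (real \<Rightarrow> real)" where
  "pl_mult f g = g \<circ> f"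

definition pl_inv :: "(real \<Rightarrow> real) \<Rightarrow> (real \<Rightarrow> real)" where
  "pl_inv f = inv f"

definition pl_conj :: "(real \<Rightarrow> real) \<Rightarrow> (real \<Rightarrow> real) \<Rightarrow> (real \<Rightarrow> real)" where
  "pl_conj a b = pl_mult (pl_mult (pl_inv b) a) b"

definition pl_comm :: "(real \<Rightarrow> real) \<Rightarrow> (real \<Rightarrow> real) \<Rightarrow> (real \<Rightarrow> real)" where
  "pl_comm a b = pl_mult (pl_mult (pl_mult a b) (pl_inv a)) (pl_inv b)"

definition supp :: "(real \<Rightarrow> real) \<Rightarrow> real set" where
  "supp f = {x. f x \<noteq> x}"

definition orbital :: "(real \<Rightarrow> real) \<Rightarrow> real set \<Rightarrow> bool" where
  "orbital f A \<longleftrightarrow> (\<exists>x\<in>supp f. A = connected_component_set (supp f) x)"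

end

theory Submission
  imports Defs
begin

definition RA :: "(real \<Rightarrow> real) \<Rightarrow> bool" where
  "RA f \<longleftrightarrow> (\<forall>c. \<exists>e>0. \<exists>m k. \<forall>x\<in>{c..c+e}. f x = m*x+k)"

definition nice :: "(real \<Rightarrow> real) \<Rightarrow> bool" where
  "nice f \<longleftrightarrow> bij f \<and> strict_mono f \<and> (\<forall>x. isCont f x) \<and> RA f \<and> (\<forall>x. x \<notin> {0..1} \<longrightarrow> f x = x)"

lemma RA_comp:
  assumes "RA f" "RA g" "strict_mono g"
  shows "RA (f \<circ> g)"
  unfolding RA_def
proof
  fix c
  obtain e1 m1 k1 where e1: "e1 > 0" "\<forall>x\<in>{c..c+e1}. g x = m1*x+k1"
    using assms(2) unfolding RA_def by blast
  obtain e2 m2 k2 where e2: "e2 > 0" "\<forall>x\<in>{g c..g c+e2}. f x = m2*x+k2"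
    using assms(1) unfolding RA_def by blast
  have "g c < g (c+e1)" using assms(3) e1(1) by (simp add: strict_mono_less)
  moreover have "g c = m1*c+k1" "g (c+e1) = m1*(c+e1)+k1" using e1 by auto
  ultimately have "m1*e1 > 0" by (simp add: algebra_simps)
  then have m1: "m1 > 0" using e1(1) by (simp add: zero_less_mult_iff)
  define d where "d = min e1 (e2/m1)"
  have d: "d > 0" using m1 e1 e2 by (simp add: d_def)
  have "\<forall>x\<in>{c..c+d}. (f \<circ> g) x = (m2*m1)*x + (m2*k1+k2)"
  proof
    fix x assume x: "x \<in> {c..c+d}"
    then have xe: "x \<in> {c..c+e1}" by (auto simp: d_def)
    have gx: "g x = m1*x+k1" using e1 xe by blast
    have gc: "g c = m1*c+k1" using e1 by auto
    have "m1 * x \<le> m1*c + m1*d" using x m1 by (simp add: distrib_left[symmetric])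
    moreover have "m1*d \<le> e2" using m1 by (simp add: d_def min_def field_simps)
    moreover have "m1 * c \<le> m1 * x" using x m1 by simp
    ultimately have "g x \<in> {g c..g c+e2}" using gx gc by auto
    then show "(f \<circ> g) x = (m2*m1)*x + (m2*k1+k2)" using e2 gx by (simp add: algebra_simps)
  qed
  then show "\<exists>e>0. \<exists>m k. \<forall>x\<in>{c..c+e}. (f \<circ> g) x = m*x+k" using d by blast
qed

lemma RA_inv:
  assumes "RA g" "strict_mono g" "bij g"
  shows "RA (inv g)"
  unfolding RA_def
proof
  fix c
  define d where "d = inv g c"
  have gd: "g d = c" using assms(3) by (simp add: d_def bij_is_surj surj_f_inv_f)
  obtain e m k where e: "e > 0" "\<forall>x\<in>{d..d+e}. g x = m*x+k"
    using assms(1) unfolding RA_def by blast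
  have "g d < g (d+e)" using assms(2) e(1) by (simp add: strict_mono_less)
  moreover have "g d = m*d+k" "g (d+e) = m*(d+e)+k" using e by auto
  ultimately have "m*e > 0" by (simp add: algebra_simps)
  then have m: "m > 0" using e(1) by (simp add: zero_less_mult_iff)
  have "\<forall>y\<in>{c..c+m*e}. inv g y = (1/m)*y + (-k/m)"
  proof
    fix y assume y: "y \<in> {c..c+m*e}"
    define x where "x = (y-k)/m"
    have "c = m*d+k" using gd e by auto
    then have "x \<in> {d..d+e}" using y m by (auto simp: x_def field_simps)
    then have "g x = y" using e m by (auto simp: x_def field_simps)
    then have "inv g y = x" using assms(3) by (metis bij_inv_eq_iff)
    then show "inv g y = (1/m)*y + (-k/m)" using m by (simp add: x_def field_simps)
  qed
  then show "\<exists>e>0. \<exists>m k. \<forall>x\<in>{c..c+e}. inv g x = m*x+k" using m e(1)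
    by (metis mult_pos_pos)
qed

lemma nice_comp:
  assumes "nice f" "nice g" shows "nice (f \<circ> g)"
proof -
  have "bij (f \<circ> g)" using assms by (simp add: nice_def bij_comp)
  moreover have "strict_mono (f \<circ> g)" using assms unfolding nice_def strict_mono_def by simp
  moreover have "\<forall>x. isCont (f \<circ> g) x" using assms unfolding nice_def
    by (simp add: comp_def isCont_o2)
  moreover have "RA (f \<circ> g)" using assms RA_comp unfolding nice_def by blast
  moreover have "\<forall>x. x \<notin> {0..1} \<longrightarrow> (f \<circ> g) x = x" using assms unfolding nice_def by simp
  ultimately show ?thesis unfolding nice_def by blast
qed

lemma nice_inv:
  assumes "nice f" shows "nice (inv f)"
proof -
  have b: "bij f" and sm: "strict_mono f" and c: "\<forall>x. isCont f x" and r: "RA f"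
    and o: "\<forall>x. x \<notin> {0..1} \<longrightarrow> f x = x" using assms unfolding nice_def by auto
  have "bij (inv f)" using b by (simp add: bij_imp_bij_inv)
  moreover have "strict_mono (inv f)"
    unfolding strict_mono_def
  proof (intro allI impI)
    fix x y :: real assume "x < y"
    then show "inv f x < inv f y" using sm b
      by (metis bij_inv_eq_iff not_less_iff_gr_or_eq strict_mono_less)
  qed
  moreover have "\<forall>x. isCont (inv f) x"
  proof
    fix y
    obtain x where y: "y = f x" using b by (metis bij_pointE)
    have "isCont (inv f) (f x)"
      by (rule isCont_inverse_function[of 1]) (use b c in \<open>auto simp: bij_is_inj\<close>)
    then show "isCont (inv f) y" using y by simp
  qed
  moreover have "RA (inv f)" using RA_inv r sm b by blast
  moreover have "\<forall>x. x \<notin> {0..1} \<longrightarrow> inv f x = x" using o b by (metis bij_inv_eq_iff)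
  ultimately show ?thesis unfolding nice_def by blast
qed


lemma PL0_nice:
  assumes "PL0 f" shows "nice f"
proof -
  note P = assms[unfolded PL0_def]
  have o: "\<forall>x. x \<notin> {0..1} \<longrightarrow> f x = x" using P by (rule conjunct1)
  have f0: "f 0 = 0" using P[THEN conjunct2] by (rule conjunct1)
  have f1: "f 1 = 1" using P[THEN conjunct2, THEN conjunct2] by (rule conjunct1)
  have sm: "strict_mono_on {0..1} f" using P[THEN conjunct2, THEN conjunct2, THEN conjunct2] by (rule conjunct1)
  have co: "continuous_on {0..1} f" using P[THEN conjunct2, THEN conjunct2, THEN conjunct2, THEN conjunct2] by (rule conjunct1)
  have "\<exists>T. finite T \<and> T \<subseteq> {0..1} \<and> 0 \<in> T \<and> 1 \<in> T \<and>
        (\<forall>a b. a \<in> T \<and> b \<in> T \<and> a < b \<and> {a<..<b} \<inter> T = {} \<longrightarrow>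
           (\<exists>m c. \<forall>x\<in>{a..b}. f x = m * x + c))"
    using P[THEN conjunct2, THEN conjunct2, THEN conjunct2, THEN conjunct2] by (rule conjunct2)
  then obtain T where TT: "finite T \<and> T \<subseteq> {0..1} \<and> 0 \<in> T \<and> 1 \<in> T \<and>
        (\<forall>a b. a \<in> T \<and> b \<in> T \<and> a < b \<and> {a<..<b} \<inter> T = {} \<longrightarrow>
           (\<exists>m c. \<forall>x\<in>{a..b}. f x = m * x + c))" ..
  have T1: "finite T" and T2: "T \<subseteq> {0..1}" and T3: "0 \<in> T" and T4: "1 \<in> T"
    using TT by simp_all
  have T5: "\<And>a b. a \<in> T \<Longrightarrow> b \<in> T \<Longrightarrow> a < b \<Longrightarrow> {a<..<b} \<inter> T = {} \<Longrightarrow> (\<exists>m c. \<forall>x\<in>{a..b}. f x = m * x + c)"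
    using TT[THEN conjunct2, THEN conjunct2, THEN conjunct2, THEN conjunct2] by blast
  note T = T1 T2 T3 T4 T5
  have in01: "x \<in> {0..1} \<Longrightarrow> f x \<in> {0..1}" for x
  proof -
    assume x: "x \<in> {0..1}"
    have "f 0 \<le> f x" using sm x by (cases "x = 0") (auto simp: strict_mono_on_def less_imp_le)
    moreover have "f x \<le> f 1" using sm x by (cases "x = 1") (auto simp: strict_mono_on_def less_imp_le)
    ultimately show ?thesis using f0 f1 by auto
  qed
  have smf: "strict_mono f"
    unfolding strict_mono_def
  proof (intro allI impI)
    fix x y :: real assume xy: "x < y"
    show "f x < f y"
    proof (cases "x \<in> {0..1}")
      case True
      show ?thesis
      proof (cases "y \<in> {0..1}")
        case True
        then show ?thesis using \<open>x \<in> {0..1}\<close> xy sm by (auto simp: strict_mono_on_def)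
      next
        case False
        then have "y > 1" using xy True by auto
        have "f y = y" using o False by blast
        moreover have "f x \<le> 1" using in01[OF True] by simp
        ultimately show ?thesis using \<open>y > 1\<close> by linarith
      qed
    next
      case False
      then have fx: "f x = x" using o by auto
      show ?thesis
      proof (cases "y \<in> {0..1}")
        case True
        then have "x < 0" using False xy by auto
        then show ?thesis using in01[OF True] fx by auto
      next
        case False
        then show ?thesis using o fx xy by auto
      qed
    qed
  qed
  have cont: "continuous_on UNIV f"
  proof -
    have c1: "continuous_on {..0} f"
    proof -
      have "\<forall>x\<in>{..0}. x = f x"
      proof
        fix x :: real assume "x \<in> {..0}"
        then show "x = f x" using o f0 by (cases "x = 0") auto
      qed
      then show ?thesis using continuous_on_eq[OF continuous_on_id, of "{..0}" f] by blast
    qed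
    have c3: "continuous_on {1..} f"
    proof -
      have "\<forall>x\<in>{1..}. x = f x"
      proof
        fix x :: real assume "x \<in> {1..}"
        then show "x = f x" using o f1 by (cases "x = 1") auto
      qed
      then show ?thesis using continuous_on_eq[OF continuous_on_id, of "{1..}" f] by blast
    qed
    have h01: "continuous_on ({..0} \<union> {0..1}) f"
      using continuous_on_closed_Un[OF _ _ c1 co] by auto
    have "continuous_on (({..0} \<union> {0..1}) \<union> {1..}) f"
      using continuous_on_closed_Un[OF _ _ h01 c3] by auto
    moreover have "(({..0} \<union> {0..1}) \<union> {1..}) = (UNIV::real set)" by auto
    ultimately show ?thesis by simp
  qed
  then have ic: "\<forall>x. isCont f x" by (simp add: continuous_on_eq_continuous_at)
  have surj: "surj f"
  proof -
    have "y \<in> range f" for y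
    proof (cases "y \<in> {0..1}")
      case True
      then obtain x where "x \<ge> 0" "x \<le> 1" "f x = y"
        using IVT'[of f 0 y 1] co f0 f1 by auto
      then show ?thesis by auto
    next
      case False then show ?thesis using o by (metis rangeI)
    qed
    then show ?thesis by auto
  qed
  have bij: "bij f" using smf surj by (simp add: bij_def strict_mono_imp_inj_on)
  have ra: "RA f"
    unfolding RA_def
  proof
    fix c :: real
    show "\<exists>e>0. \<exists>m k. \<forall>x\<in>{c..c+e}. f x = m*x+k"
    proof (cases "c < 0")
      case True
      have "\<forall>x\<in>{c..c+(-c/2)}. f x = 1*x+0" using o True by auto
      moreover have "-c/2 > 0" using True by simp
      ultimately show ?thesis by blast
    next
      case c0: False
      show ?thesis
      proof (cases "c \<ge> 1")
        case True
        have "\<forall>x\<in>{c..c+1}. f x = 1*x+0"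
        proof
          fix x assume "x \<in> {c..c+1}"
          then show "f x = 1*x+0" using o True f1 by (cases "x = 1") auto
        qed
        then show ?thesis using zero_less_one by blast
      next
        case False
        define Sb where "Sb = {t\<in>T. c < t}"
        define Sa where "Sa = {t\<in>T. t \<le> c}"
        have Sbne: "Sb \<noteq> {}" "finite Sb" using T False by (auto simp: Sb_def)
        have Sane: "Sa \<noteq> {}" "finite Sa" using T c0 by (auto simp: Sa_def)
        define b where "b = Min Sb"
        define a where "a = Max Sa"
        have b: "b \<in> T" "c < b" using Min_in[OF Sbne(2) Sbne(1)] by (auto simp: b_def Sb_def)
        have a: "a \<in> T" "a \<le> c" using Max_in[OF Sane(2) Sane(1)] by (auto simp: a_def Sa_def)
        have "{a<..<b} \<inter> T = {}"
        proof (rule ccontr)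
          assume "{a<..<b} \<inter> T \<noteq> {}"
          then obtain t where t: "t \<in> T" "a < t" "t < b" by auto
          show False
          proof (cases "t \<le> c")
            case True
            then have "t \<in> Sa" using t by (auto simp: Sa_def)
            then have "t \<le> a" using Sane by (simp add: a_def)
            then show False using t by auto
          next
            case False
            then have "t \<in> Sb" using t by (auto simp: Sb_def)
            then have "b \<le> t" using Sbne by (simp add: b_def)
            then show False using t by auto
          qed
        qed
        then obtain m k where mk: "\<forall>x\<in>{a..b}. f x = m * x + k" using T(5)[OF a(1) b(1)] a b by force
        have "\<forall>x\<in>{c..c+(b-c)}. f x = m*x+k" using mk a by auto
        moreover have "b - c > 0" using b(2) by simp
        ultimately show ?thesis by blast
      qed
    qed
  qed
  show ?thesis unfolding nice_def using bij smf ic ra o by (intro conjI)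
qed

lemma nice_fix_outside:
  assumes "nice f" "f a \<noteq> a" shows "a \<in> {0..1}"
  using assms unfolding nice_def by blast

lemma orbital_interval:
  assumes nf: "nice f" and fa: "f a \<noteq> a"
  shows "\<exists>p q. p < a \<and> a < q \<and> f p = p \<and> f q = q \<and>
           connected_component_set (supp f) a = {p<..<q} \<and> (\<forall>x\<in>{p<..<q}. f x \<noteq> x)"
proof -
  have a01: "a \<in> {0..1}" using nice_fix_outside[OF nf fa] .
  have o: "\<forall>x. x \<notin> {0..1} \<longrightarrow> f x = x" and ic: "\<forall>x. isCont f x"
    using nf unfolding nice_def by auto
  have cf: "continuous_on UNIV f" using ic by (simp add: continuous_at_imp_continuous_on)
  have clF: "closed {x. f x = x}"
    using closed_Collect_eq[OF cf continuous_on_id] by simp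
  define P where "P = {x. x \<le> a \<and> f x = x}"
  define Q where "Q = {x. a \<le> x \<and> f x = x}"
  have P_eq: "P = {..a} \<inter> {x. f x = x}" by (auto simp: P_def)
  have Q_eq: "Q = {a..} \<inter> {x. f x = x}" by (auto simp: Q_def)
  have clP: "closed P" unfolding P_eq using clF by (intro closed_Int) auto
  have clQ: "closed Q" unfolding Q_eq using clF by (intro closed_Int) auto
  have m1: "-1 \<in> P" using o a01 by (auto simp: P_def)
  have t2: "2 \<in> Q" using o a01 by (auto simp: Q_def)
  have bP: "bdd_above P" by (auto simp: P_def bdd_above_def)
  have bQ: "bdd_below Q" by (auto simp: Q_def bdd_below_def)
  define p where "p = Sup P"
  define q where "q = Inf Q"
  have pP: "p \<in> P" unfolding p_def using closed_contains_Sup[OF _ bP clP] m1 by auto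
  have qQ: "q \<in> Q" unfolding q_def using closed_contains_Inf[OF _ bQ clQ] t2 by auto
  have fp: "f p = p" and pa: "p \<le> a" using pP by (auto simp: P_def)
  have fq: "f q = q" and qa: "a \<le> q" using qQ by (auto simp: Q_def)
  have pa': "p < a" using pa fp fa by (cases "p = a") auto
  have qa': "a < q" using qa fq fa by (cases "q = a") auto
  have nofix: "\<forall>x\<in>{p<..<q}. f x \<noteq> x"
  proof
    fix x assume x: "x \<in> {p<..<q}"
    show "f x \<noteq> x"
    proof
      assume fx: "f x = x"
      show False
      proof (cases "x \<le> a")
        case True
        then have "x \<in> P" using fx by (auto simp: P_def)
        then have "x \<le> p" unfolding p_def using bP by (rule cSup_upper)
        then show False using x by auto
      next
        case False
        then have "x \<in> Q" using fx by (auto simp: Q_def)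
        then have "q \<le> x" unfolding q_def using bQ by (rule cInf_lower)
        then show False using x by auto
      qed
    qed
  qed
  have sub1: "{p<..<q} \<subseteq> connected_component_set (supp f) a"
    by (rule connected_component_maximal) (use pa' qa' nofix in \<open>auto simp: supp_def\<close>)
  have sub2: "connected_component_set (supp f) a \<subseteq> {p<..<q}"
  proof
    fix y assume y: "y \<in> connected_component_set (supp f) a"
    let ?C = "connected_component_set (supp f) a"
    have cC: "connected ?C" by (rule connected_connected_component)
    have aC: "a \<in> ?C" using fa by (simp add: supp_def)
    have CS: "?C \<subseteq> supp f" by (rule connected_component_subset)
    show "y \<in> {p<..<q}"
    proof (rule ccontr)
      assume "y \<notin> {p<..<q}"
      then have "y \<le> p \<or> q \<le> y" by auto
      then show False
      proof
        assume "y \<le> p"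
        then have "p \<in> {y..a}" using pa by auto
        then have "p \<in> ?C" using connected_contains_Icc[OF cC y aC] by blast
        then show False using CS fp by (auto simp: supp_def)
      next
        assume "q \<le> y"
        then have "q \<in> {a..y}" using qa by auto
        then have "q \<in> ?C" using connected_contains_Icc[OF cC aC y] by blast
        then show False using CS fq by (auto simp: supp_def)
      qed
    qed
  qed
  show ?thesis using sub1 sub2 pa' qa' fp fq nofix by blast
qed

lemma comp_image_sub:
  assumes "\<forall>x. isCont g x"
  shows "g ` connected_component_set S a \<subseteq> connected_component_set (g ` S) (g a)"
proof (cases "a \<in> S")
  case True
  show ?thesis
  proof (rule connected_component_maximal)
    show "g a \<in> g ` connected_component_set S a" using True by simp
    show "connected (g ` connected_component_set S a)"
      by (rule connected_continuous_image)
        (use assms in \<open>auto intro: continuous_at_imp_continuous_on connected_connected_component\<close>)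
    show "g ` connected_component_set S a \<subseteq> g ` S"
      using connected_component_subset by (rule image_mono)
  qed
next
  case False
  then have "connected_component_set S a = {}" using connected_component_eq_empty by blast
  then show ?thesis by (metis empty_subsetI image_empty)
qed

lemma comp_image:
  assumes "nice g"
  shows "connected_component_set (g ` S) (g a) = g ` connected_component_set S a"
proof
  show "g ` connected_component_set S a \<subseteq> connected_component_set (g ` S) (g a)"
    using comp_image_sub assms unfolding nice_def by blast
next
  have b: "bij g" using assms unfolding nice_def by auto
  have ci: "\<forall>x. isCont (inv g) x" using nice_inv[OF assms] unfolding nice_def by auto
  have "inv g ` connected_component_set (g ` S) (g a)
        \<subseteq> connected_component_set (inv g ` g ` S) (inv g (g a))"
    by (rule comp_image_sub[OF ci])
  also have "inv g ` g ` S = S" using b by (simp add: bij_is_inj image_comp)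
  also have "inv g (g a) = a" using b by (simp add: bij_is_inj)
  finally have "g ` inv g ` connected_component_set (g ` S) (g a) \<subseteq> g ` connected_component_set S a"
    by (rule image_mono)
  moreover have "g ` inv g ` X = X" for X using b by (simp add: bij_is_surj image_f_inv_f)
  ultimately show "connected_component_set (g ` S) (g a) \<subseteq> g ` connected_component_set S a" by simp
qed

lemma supp_conj:
  assumes "bij g"
  shows "supp (g \<circ> (f \<circ> inv g)) = g ` supp f"
proof -
  have "x \<in> supp (g \<circ> (f \<circ> inv g)) \<longleftrightarrow> x \<in> g ` supp f" for x
  proof -
    have "x \<in> supp (g \<circ> (f \<circ> inv g)) \<longleftrightarrow> g (f (inv g x)) \<noteq> g (inv g x)"
      using assms by (simp add: supp_def bij_is_surj surj_f_inv_f)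
    also have "\<dots> \<longleftrightarrow> inv g x \<in> supp f"
      using assms by (simp add: supp_def bij_is_inj inj_eq)
    also have "\<dots> \<longleftrightarrow> x \<in> g ` supp f"
      using assms by (metis bij_inv_eq_iff image_iff)
    finally show ?thesis .
  qed
  then show ?thesis by blast
qed

lemma funpow_commute_pt:
  fixes w h :: "real \<Rightarrow> real"
  assumes "\<forall>x. h (w x) = w (h x)"
  shows "h ((w ^^ n) x) = (w ^^ n) (h x)"
  by (induction n) (use assms in auto)

lemma funpow_inj_pt:
  fixes w :: "real \<Rightarrow> real"
  assumes "inj w" "(w ^^ n) a = (w ^^ n) b"
  shows "a = b"
  using assms(2)
proof (induction n)
  case 0
  then show ?case by simp
next
  case (Suc n)
  have "w ((w ^^ n) a) = w ((w ^^ n) b)" using Suc.prems by simp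
  then have "(w ^^ n) a = (w ^^ n) b" by (rule injD[OF assms(1)])
  then show ?case by (rule Suc.IH)
qed

lemma iter_below:
  fixes w :: "real \<Rightarrow> real" and p q x e :: real
  assumes cw: "\<forall>x. isCont w x" and sw: "strict_mono w" and wp: "w p = p"
    and dn: "\<forall>x\<in>{p<..<q}. w x < x" and x: "x \<in> {p<..<q}" and e: "e > 0"
  shows "\<exists>n. (w ^^ n) x \<in> {p<..<q} \<and> (w ^^ n) x < p + e"
proof -
  define X where "X n = (w ^^ n) x" for n
  have XU: "X n \<in> {p<..<q}" for n
  proof (induction n)
    case 0 then show ?case using x by (simp add: X_def)
  next
    case (Suc n)
    have "X (Suc n) = w (X n)" by (simp add: X_def)
    moreover have "w (X n) < X n" using dn Suc by blast
    moreover have "w p < w (X n)" using sw Suc unfolding strict_mono_def by auto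
    ultimately show ?case using Suc wp by auto
  qed
  have XS: "X (Suc n) = w (X n)" for n by (simp add: X_def)
  show ?thesis
  proof (rule ccontr)
    assume neg: "\<not> ?thesis"
    have ge: "\<forall>n. p + e \<le> X n"
    proof
      fix n
      show "p + e \<le> X n" using neg[unfolded not_ex, rule_format, of n] XU[of n] unfolding X_def by auto
    qed
    have dec: "decseq X"
      unfolding decseq_Suc_iff using XS dn XU by (simp add: less_imp_le)
    obtain L where L: "X \<longlonglongrightarrow> L" "\<forall>i. L \<le> X i"
      using decseq_convergent[OF dec, of "p+e"] ge by blast
    have Lge: "p + e \<le> L" using LIMSEQ_le_const[OF L(1)] ge by auto
    have "(\<lambda>n. X (Suc n)) \<longlonglongrightarrow> L" using L(1) by (rule LIMSEQ_Suc)
    moreover have "(\<lambda>n. w (X n)) \<longlonglongrightarrow> w L" using L(1) cw by (simp add: isCont_tendsto_compose)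
    moreover have "(\<lambda>n. w (X n)) = (\<lambda>n. X (Suc n))" using XS by simp
    ultimately have "w L = L" using LIMSEQ_unique by metis
    moreover have "L \<le> X 0" using L(2) by blast
    moreover have "L \<in> {p<..<q}" using Lge e \<open>L \<le> X 0\<close> XU[of 0] by auto
    ultimately have "w L = L" "L \<in> {p<..<q}" by auto
    then show False using dn by fastforce
  qed
qed

lemma fix_spread:
  fixes w h :: "real \<Rightarrow> real" and p q e :: real
  assumes cw: "\<forall>x. isCont w x" and sw: "strict_mono w" and wp: "w p = p"
    and dn: "\<forall>x\<in>{p<..<q}. w x < x"
    and comm: "\<forall>x. h (w x) = w (h x)" and ra: "RA h"
    and eU: "e \<in> {p<..<q}" and he: "h e = e"
  shows "\<forall>x\<in>{p<..<q}. h x = x"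
proof -
  obtain d m k where d: "d > 0" "\<forall>x\<in>{p..p+d}. h x = m*x+k"
    using ra unfolding RA_def by blast
  obtain n where n: "(w ^^ n) e \<in> {p<..<q}" "(w ^^ n) e < p + d"
    using iter_below[OF cw sw wp dn eU d(1)] by blast
  define x1 where "x1 = (w ^^ n) e"
  define x2 where "x2 = w x1"
  have x2x1: "x2 < x1" using dn n by (simp add: x1_def x2_def)
  have "w p < w x1" using sw n unfolding strict_mono_def x1_def by auto
  then have px2: "p < x2" using wp by (simp add: x2_def)
  have h1: "h x1 = x1" using funpow_commute_pt[OF comm, of n e] he by (simp add: x1_def)
  have h2: "h x2 = x2" using funpow_commute_pt[OF comm, of "Suc n" e] he by (simp add: x1_def x2_def)
  have "m*x1+k = x1" using d(2) h1 n by (auto simp: x1_def)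
  moreover have "m*x2+k = x2" using d(2) h2 n x2x1 px2 by (auto simp: x1_def)
  ultimately have "(m - 1) * (x1 - x2) = 0" by (simp add: algebra_simps)
  then have m: "m = 1" using x2x1 by simp
  then have idh: "\<forall>y\<in>{p..p+d}. h y = y" using d(2) \<open>m*x1+k = x1\<close> by auto
  show ?thesis
  proof
    fix x assume x: "x \<in> {p<..<q}"
    obtain n where n: "(w ^^ n) x \<in> {p<..<q}" "(w ^^ n) x < p + d"
      using iter_below[OF cw sw wp dn x d(1)] by blast
    have "h ((w ^^ n) x) = (w ^^ n) x" using idh n by auto
    then have "(w ^^ n) (h x) = (w ^^ n) x" using funpow_commute_pt[OF comm] by metis
    then show "h x = x" using funpow_inj_pt[of w n] sw strict_mono_imp_inj_on by blast
  qed
qed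

lemma sign_const:
  fixes u :: "real \<Rightarrow> real"
  assumes cu: "\<forall>x. isCont u x" and nf: "\<forall>x\<in>{p<..<q}. u x \<noteq> x"
  shows "(\<forall>x\<in>{p<..<q}. u x < x) \<or> (\<forall>x\<in>{p<..<q}. x < u x)"
proof (rule ccontr)
  assume "\<not> ?thesis"
  then obtain x1 x2 where x1: "x1 \<in> {p<..<q}" "x1 < u x1" and x2: "x2 \<in> {p<..<q}" "u x2 < x2"
    using nf by (metis linorder_neqE_linordered_idom)
  define g where "g x = u x - x" for x
  have cg: "continuous_on S g" for S unfolding g_def
    by (intro continuous_at_imp_continuous_on ballI isCont_diff) (use cu in auto)
  have g1: "0 < g x1" and g2: "g x2 < 0" using x1 x2 by (auto simp: g_def)
  show False
  proof (cases "x1 \<le> x2")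
    case True
    then obtain z where z: "z \<ge> x1" "z \<le> x2" "g z = 0"
      using IVT2'[of g x2 0 x1, OF _ _ True cg] g1 g2 by auto
    then have "z \<in> {p<..<q}" using x1 x2 by auto
    then show False using nf z(3) by (auto simp: g_def)
  next
    case False
    then obtain z where z: "z \<ge> x2" "z \<le> x1" "g z = 0"
      using IVT'[of g x2 0 x1, OF _ _ _ cg] g1 g2 by auto
    then have "z \<in> {p<..<q}" using x1 x2 by auto
    then show False using nf z(3) by (auto simp: g_def)
  qed
qed

lemma no_fix_in:
  fixes u h :: "real \<Rightarrow> real"
  assumes nu: "nice u" and nh: "nice h" and comm: "\<forall>x. u (h x) = h (u x)"
    and pq: "u p = p" "u q = q" "\<forall>x\<in>{p<..<q}. u x \<noteq> x"
    and a: "a \<in> {p<..<q}" "h a \<noteq> a" and e: "e \<in> {p<..<q}" "h e = e"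
  shows False
proof -
  have cu: "\<forall>x. isCont u x" and su: "strict_mono u" and bu: "bij u"
    using nu unfolding nice_def by auto
  have rh: "RA h" using nh unfolding nice_def by auto
  have comm': "\<forall>x. h (u x) = u (h x)" using comm by simp
  from sign_const[OF cu pq(3)] show False
  proof
    assume dn: "\<forall>x\<in>{p<..<q}. u x < x"
    have "\<forall>x\<in>{p<..<q}. h x = x" by (rule fix_spread[OF cu su pq(1) dn comm' rh e])
    then show False using a by auto
  next
    assume up: "\<forall>x\<in>{p<..<q}. x < u x"
    define w where "w = inv u"
    have nw: "nice w" unfolding w_def by (rule nice_inv[OF nu])
    have cw: "\<forall>x. isCont w x" and sw: "strict_mono w" using nw unfolding nice_def by auto
    have iu: "inj u" using bu by (simp add: bij_is_inj)
    have uw: "u (w x) = x" for x using bu by (simp add: w_def bij_is_surj surj_f_inv_f)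
    have wp: "w p = p" using pq(1) iu by (simp add: w_def inv_f_eq)
    have wq: "w q = q" using pq(2) iu by (simp add: w_def inv_f_eq)
    have dn: "\<forall>x\<in>{p<..<q}. w x < x"
    proof
      fix x assume x: "x \<in> {p<..<q}"
      have "w p < w x" "w x < w q" using sw x unfolding strict_mono_def by auto
      then have "w x \<in> {p<..<q}" using wp wq by auto
      then have "w x < u (w x)" using up by blast
      then show "w x < x" using uw by simp
    qed
    have commw: "\<forall>x. h (w x) = w (h x)"
    proof
      fix x
      have "u (h (w x)) = h x" using comm uw by metis
      then show "h (w x) = w (h x)" using iu by (simp add: w_def inv_f_eq)
    qed
    have "\<forall>x\<in>{p<..<q}. h x = x" by (rule fix_spread[OF cw sw wp dn commw rh e])
    then show False using a by auto
  qed
qed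

lemma orbitals_eq:
  fixes u h :: "real \<Rightarrow> real"
  assumes nu: "nice u" and nh: "nice h" and comm: "\<forall>x. u (h x) = h (u x)"
    and ua: "u a \<noteq> a" and ha: "h a \<noteq> a"
  shows "connected_component_set (supp u) a = connected_component_set (supp h) a"
proof -
  obtain p q where U: "p < a" "a < q" "u p = p" "u q = q"
    "connected_component_set (supp u) a = {p<..<q}" "\<forall>x\<in>{p<..<q}. u x \<noteq> x"
    using orbital_interval[OF nu ua] by blast
  obtain s t where H: "s < a" "a < t" "h s = s" "h t = t"
    "connected_component_set (supp h) a = {s<..<t}" "\<forall>x\<in>{s<..<t}. h x \<noteq> x"
    using orbital_interval[OF nh ha] by blast
  have comm': "\<forall>x. h (u x) = u (h x)" using comm by simp
  have aU: "a \<in> {p<..<q}" and aH: "a \<in> {s<..<t}" using U H by auto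
  have 1: "\<not> p < s"
  proof
    assume "p < s"
    then have "s \<in> {p<..<q}" using H U by auto
    then show False using no_fix_in[OF nu nh comm U(3) U(4) U(6) aU ha _ H(3)] by blast
  qed
  have 2: "\<not> s < p"
  proof
    assume "s < p"
    then have "p \<in> {s<..<t}" using H U by auto
    then show False using no_fix_in[OF nh nu comm' H(3) H(4) H(6) aH ua _ U(3)] by blast
  qed
  have 3: "\<not> t < q"
  proof
    assume "t < q"
    then have "t \<in> {p<..<q}" using H U by auto
    then show False using no_fix_in[OF nu nh comm U(3) U(4) U(6) aU ha _ H(4)] by blast
  qed
  have 4: "\<not> q < t"
  proof
    assume "q < t"
    then have "q \<in> {s<..<t}" using H U by auto
    then show False using no_fix_in[OF nh nu comm' H(3) H(4) H(6) aH ua _ U(4)] by blast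
  qed
  have "p = s" "q = t" using 1 2 3 4 by auto
  then show ?thesis using U(5) H(5) by simp
qed

lemma comm_decode:
  assumes "bij a" "bij b" "pl_comm a b = id"
  shows "\<forall>x. b (a x) = a (b x)"
proof
  fix x
  have "inv b (inv a (b (a x))) = x" using assms(3) unfolding pl_comm_def pl_mult_def pl_inv_def
    by (metis comp_apply id_apply)
  then have "b (inv b (inv a (b (a x)))) = b x" by simp
  then have "inv a (b (a x)) = b x" using assms(2) by (simp add: bij_is_surj surj_f_inv_f)
  then have "a (inv a (b (a x))) = a (b x)" by simp
  then show "b (a x) = a (b x)" using assms(1) by (simp add: bij_is_surj surj_f_inv_f)
qed

lemma image_interval:
  assumes "nice g"
  shows "g ` {l<..<r} = {g l<..<g r}"
proof
  have sg: "strict_mono g" and bg: "bij g" using assms unfolding nice_def by auto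
  show "g ` {l<..<r} \<subseteq> {g l<..<g r}" using sg unfolding strict_mono_def by auto
  show "{g l<..<g r} \<subseteq> g ` {l<..<r}"
  proof
    fix y assume y: "y \<in> {g l<..<g r}"
    obtain x where x: "y = g x" using bg by (metis bij_pointE)
    have "l < x" "x < r" using y x sg by (auto simp: strict_mono_less)
    then show "y \<in> g ` {l<..<r}" using x by auto
  qed
qed

theorem lemma2p3:
  fixes f0 f1 :: "real \<Rightarrow> real" and A B :: "real set"
  assumes "PL0 f0" and "PL0 f1"
    and "pl_comm (pl_conj f1 f0) (pl_mult f0 (pl_inv f1)) = id"
    and "pl_comm (pl_mult f0 (pl_inv f1)) (pl_conj f1 (pl_mult f0 f0)) = id"
    and "orbital f0 A" and "orbital f1 B" and "A \<inter> B \<noteq> {}"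
  shows "A \<subseteq> B \<or> B \<subseteq> A"
proof (rule ccontr)
  assume neg: "\<not> (A \<subseteq> B \<or> B \<subseteq> A)"
  have n0: "nice f0" using assms(1) by (rule PL0_nice)
  have n1: "nice f1" using assms(2) by (rule PL0_nice)
  have b0: "bij f0" and b1: "bij f1" using n0 n1 unfolding nice_def by auto
  have i0: "inj f0" and i1: "inj f1" using b0 b1 by (auto simp: bij_is_inj)
  define u where "u = inv f1 \<circ> f0"
  define h1 where "h1 = f0 \<circ> (f1 \<circ> inv f0)"
  define h2 where "h2 = (f0 \<circ> f0) \<circ> (f1 \<circ> inv (f0 \<circ> f0))"
  have e1: "pl_conj f1 f0 = h1" by (simp add: pl_conj_def pl_mult_def pl_inv_def h1_def)
  have e2: "pl_mult f0 (pl_inv f1) = u" by (simp add: pl_mult_def pl_inv_def u_def)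
  have e3: "pl_conj f1 (pl_mult f0 f0) = h2" by (simp add: pl_conj_def pl_mult_def pl_inv_def h2_def)
  have n00: "nice (f0 \<circ> f0)" using nice_comp[OF n0 n0] .
  have nu: "nice u" unfolding u_def by (intro nice_comp nice_inv n0 n1)
  have nh1: "nice h1" unfolding h1_def by (intro nice_comp nice_inv n0 n1)
  have nh2: "nice h2" unfolding h2_def by (intro nice_comp nice_inv n00 n1)
  have bu: "bij u" and bh1: "bij h1" and bh2: "bij h2" using nu nh1 nh2 unfolding nice_def by auto
  have c1: "\<forall>x. u (h1 x) = h1 (u x)"
    using comm_decode[OF bh1 bu] assms(3) e1 e2 by simp
  have c2': "\<forall>x. h2 (u x) = u (h2 x)"
    using comm_decode[OF bu bh2] assms(4) e2 e3 by simp
  have c2: "\<forall>x. u (h2 x) = h2 (u x)" using c2' by simp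
  obtain x0 where x0: "x0 \<in> supp f0" "A = connected_component_set (supp f0) x0"
    using assms(5) unfolding orbital_def by blast
  obtain y0 where y0: "y0 \<in> supp f1" "B = connected_component_set (supp f1) y0"
    using assms(6) unfolding orbital_def by blast
  have fx0: "f0 x0 \<noteq> x0" using x0(1) by (simp add: supp_def)
  have fy0: "f1 y0 \<noteq> y0" using y0(1) by (simp add: supp_def)
  obtain p q where A: "f0 p = p" "f0 q = q" "A = {p<..<q}" "\<forall>x\<in>{p<..<q}. f0 x \<noteq> x"
    using orbital_interval[OF n0 fx0] x0(2) by metis
  obtain l r where B: "f1 l = l" "f1 r = r" "B = {l<..<r}" "\<forall>x\<in>{l<..<r}. f1 x \<noteq> x"
    using orbital_interval[OF n1 fy0] y0(2) by metis
  obtain c where c: "c \<in> A" "c \<in> B" using assms(7) by blast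
  have nAB: "\<not> (l \<le> p \<and> q \<le> r)"
  proof
    assume "l \<le> p \<and> q \<le> r"
    then have "A \<subseteq> B" using A(3) B(3) by auto
    then show False using neg by blast
  qed
  have nBA: "\<not> (p \<le> l \<and> r \<le> q)"
  proof
    assume "p \<le> l \<and> r \<le> q"
    then have "B \<subseteq> A" using A(3) B(3) by auto
    then show False using neg by blast
  qed
  have cpq: "p < c" "c < q" "l < c" "c < r" using c A(3) B(3) by auto
  obtain a bb where ab: "a \<in> B" "f0 a = a" "bb \<in> A" "bb = l \<or> bb = r"
  proof (cases "p < l")
    case True
    then have "q < r" using nAB nBA by linarith
    then show ?thesis using that[of q l] True cpq A B by auto
  next
    case False
    then have "l < p" using nBA nAB by linarith
    then have "r < q" using nAB nBA by linarith
    then show ?thesis using that[of p r] \<open>l < p\<close> cpq A B by auto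
  qed
  have f1a: "f1 a \<noteq> a" using ab(1) B(3) B(4) by auto
  have if0a: "inv f0 a = a" using ab(2) i0 by (simp add: inv_f_eq)
  have f00a: "(f0 \<circ> f0) a = a" using ab(2) by simp
  have i00: "inj (f0 \<circ> f0)" using i0 by (simp add: inj_compose)
  have if00a: "inv (f0 \<circ> f0) a = a" using f00a i00 by (simp add: inv_f_eq)
  have ua: "u a \<noteq> a"
  proof
    assume "u a = a"
    then have "inv f1 a = a" using ab(2) by (simp add: u_def)
    then have "f1 (inv f1 a) = f1 a" by simp
    then show False using f1a b1 by (simp add: bij_is_surj surj_f_inv_f)
  qed
  have h1a: "h1 a \<noteq> a"
  proof
    assume "h1 a = a"
    then have "f0 (f1 a) = f0 a" using if0a ab(2) by (simp add: h1_def)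
    then show False using f1a i0 by (simp add: inj_eq)
  qed
  have h2a: "h2 a \<noteq> a"
  proof
    assume "h2 a = a"
    then have "(f0 \<circ> f0) (f1 a) = (f0 \<circ> f0) a" using if00a f00a by (simp add: h2_def)
    then show False using f1a i0 by (simp add: inj_eq)
  qed
  have Ba: "connected_component_set (supp f1) a = B"
    using y0(2) ab(1) connected_component_eq by blast
  have s1: "supp h1 = f0 ` supp f1" unfolding h1_def by (rule supp_conj[OF b0])
  have b00: "bij (f0 \<circ> f0)" using n00 unfolding nice_def by auto
  have s2: "supp h2 = (f0 \<circ> f0) ` supp f1" unfolding h2_def by (rule supp_conj[OF b00])
  have C1: "connected_component_set (supp h1) a = f0 ` B"
    using comp_image[OF n0, of "supp f1" a] s1 ab(2) Ba by simp
  have C2: "connected_component_set (supp h2) a = (f0 \<circ> f0) ` B"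
    using comp_image[OF n00, of "supp f1" a] s2 f00a Ba by simp
  have "connected_component_set (supp h1) a = connected_component_set (supp h2) a"
    using orbitals_eq[OF nu nh1 c1 ua h1a] orbitals_eq[OF nu nh2 c2 ua h2a] by simp
  then have eq: "f0 ` B = (f0 \<circ> f0) ` B" using C1 C2 by simp
  have "(f0 \<circ> f0) ` B = f0 ` (f0 ` B)" by (rule image_comp[symmetric])
  with eq have "f0 ` B = f0 ` (f0 ` B)" by simp
  then have "B = f0 ` B" using i0 by (simp add: inj_image_eq_iff)
  then have "{l<..<r} = {f0 l<..<f0 r}" using image_interval[OF n0] B(3) by simp
  moreover have "l < r" using cpq by simp
  ultimately have "f0 l = l \<and> f0 r = r" by (simp add: greaterThanLessThan_eq_iff)
  then have "f0 bb = bb" using ab(4) by auto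
  then show False using ab(3) A(3) A(4) by auto
qed

end
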